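(* Let $c\ge 2$ and let $G$ be a $c$-edge-colored graph. Then $G$ is PC acyclic of type 3 if and only if $G$ has no PC closed walk.
   Context: A $c$-edge-colored graph is a finite undirected graph in which every edge is assigned a color from $\{1,\dots,c\}$. A walk $W=v_1e_1v_2\dots v_{p-1}e_{p-1}v_p$ is closed if $v_1=v_p$. A walk is properly colored (PC) if $e_i$ and $e_{i+1}$ have different colors for every $i\in\{1,\dots,p-2\}$ and, if the walk is closed, $e_{p-1}$ and $e_1$ also have different colors. An ordering $v_1,\dots,v_n$ of $V(G)$ is of type 3 if for every $i\in[n]$, all edges from $v_i$ to $\{v_{i+1},\dots,v_n\}$ have the same color. $G$ is PC acyclic of type 3 if it has an ordering of its vertices of type 3. *)

theory Defs
  imports Main
begin

definition edge_colored_graph :: "nat \<Rightarrow> 'v set \<Rightarrow> 'v set set \<Rightarrow> ('v set \<Rightarrow> nat) \<Rightarrow> bool" where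
  "edge_colored_graph c V E col \<longleftrightarrow>
     finite V \<and> (\<forall>e\<in>E. e \<subseteq> V \<and> card e = 2) \<and> (\<forall>e\<in>E. col e \<in> {1..c})"

definition walk :: "'v set \<Rightarrow> 'v set set \<Rightarrow> 'v list \<Rightarrow> bool" where
  "walk V E vs \<longleftrightarrow> vs \<noteq> [] \<and> set vs \<subseteq> V \<and>
     (\<forall>i. Suc i < length vs \<longrightarrow> {vs ! i, vs ! Suc i} \<in> E)"

definition walk_edge :: "'v list \<Rightarrow> nat \<Rightarrow> 'v set" where
  "walk_edge vs i = {vs ! i, vs ! Suc i}"

definition pc_closed_walk :: "'v set \<Rightarrow> 'v set set \<Rightarrow> ('v set \<Rightarrow> nat) \<Rightarrow> 'v list \<Rightarrow> bool" where
  "pc_closed_walk V E col vs \<longleftrightarrow>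
     walk V E vs \<and> length vs \<ge> 2 \<and> hd vs = last vs \<and>
     (\<forall>i. i + 2 < length vs \<longrightarrow> col (walk_edge vs i) \<noteq> col (walk_edge vs (Suc i))) \<and>
     col (walk_edge vs (length vs - 2)) \<noteq> col (walk_edge vs 0)"

definition type3_ordering :: "'v set \<Rightarrow> 'v set set \<Rightarrow> ('v set \<Rightarrow> nat) \<Rightarrow> 'v list \<Rightarrow> bool" where
  "type3_ordering V E col ord \<longleftrightarrow>
     distinct ord \<and> set ord = V \<and>
     (\<forall>i j k. i < j \<and> i < k \<and> j < length ord \<and> k < length ord \<and>
        {ord ! i, ord ! j} \<in> E \<and> {ord ! i, ord ! k} \<in> E \<longrightarrow>
        col {ord ! i, ord ! j} = col {ord ! i, ord ! k})"

definition pc_acyclic_type3 :: "'v set \<Rightarrow> 'v set set \<Rightarrow> ('v set \<Rightarrow> nat) \<Rightarrow> bool" where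
  "pc_acyclic_type3 V E col \<longleftrightarrow> (\<exists>ord. type3_ordering V E col ord)"

end

theory Submission
  imports Defs
begin

lemma type3_no_pc:
  assumes Ec: "\<forall>e\<in>E. card e = 2"
    and t: "type3_ordering V E col ord" and pw: "pc_closed_walk V E col vs"
  shows False
proof -
  from t have d: "distinct ord" "set ord = V" and t3: "\<forall>i j k. i < j \<and> i < k \<and> j < length ord \<and> k < length ord \<and>
        {ord ! i, ord ! j} \<in> E \<and> {ord ! i, ord ! k} \<in> E \<longrightarrow>
        col {ord ! i, ord ! j} = col {ord ! i, ord ! k}" unfolding type3_ordering_def by auto
  from pw have w: "walk V E vs" "length vs \<ge> 2" "hd vs = last vs"
    and pc: "\<forall>i. i+2<length vs \<longrightarrow> col (walk_edge vs i) \<noteq> col (walk_edge vs (Suc i))"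
    and pcl: "col (walk_edge vs (length vs - 2)) \<noteq> col (walk_edge vs 0)"
    unfolding pc_closed_walk_def by auto
  define L where "L = length vs"
  have L2: "L \<ge> 2" using w L_def by auto
  have sub: "set vs \<subseteq> V" and we: "\<And>i. Suc i < L \<Longrightarrow> {vs!i, vs!Suc i} \<in> E"
    using w(1) unfolding walk_def L_def by auto
  have inV: "\<And>q. q<L \<Longrightarrow> vs!q \<in> set ord" using sub d L_def nth_mem by blast
  define pos where "pos x = (LEAST m. ord!m = x)" for x
  have pos: "pos x < length ord \<and> ord ! pos x = x" if xin: "x \<in> set ord" for x
  proof -
    obtain m where m: "m < length ord" "ord ! m = x" using xin in_set_conv_nth[of x ord] by blast
    have "ord ! pos x = x" unfolding pos_def using m(2) by (rule LeastI)
    moreover have "pos x \<le> m" unfolding pos_def using m(2) by (rule Least_le)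
    ultimately show ?thesis using m by auto
  qed
  obtain p0 where p0: "p0 < L" "\<forall>q. q<L \<longrightarrow> pos(vs!p0) \<le> pos(vs!q)"
    using ex_has_least_nat[of "\<lambda>q. q<L" 0 "\<lambda>q. pos (vs!q)"] L2 by auto
  have last0: "vs!(L-1) = vs!0" 
  proof -
    have "vs \<noteq> []" using L2 L_def by auto
    then show ?thesis using w(3) L_def by (metis hd_conv_nth last_conv_nth)
  qed
  have key: "\<exists>a b. {vs!p0,a}\<in>E \<and> {vs!p0,b}\<in>E \<and> col {vs!p0,a} \<noteq> col{vs!p0,b} \<and> (\<exists>qa<L. a = vs!qa) \<and> (\<exists>qb<L. b = vs!qb)"
  proof (cases "0 < p0 \<and> p0 < L-1")
    case True
    have e1: "{vs!(p0-1), vs!p0} \<in> E" using we[of "p0-1"] True by auto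
    have e2: "{vs!p0, vs!Suc p0} \<in> E" using we[of "p0"] True by auto
    have "col (walk_edge vs (p0-1)) \<noteq> col (walk_edge vs (Suc (p0-1)))"
    proof -
      have "p0 - 1 + 2 < length vs" using True L_def by linarith
      then show ?thesis using pc by blast
    qed
    then have "col {vs!(p0-1), vs!p0} \<noteq> col {vs!p0, vs!Suc p0}"
      using True by (simp add: walk_edge_def)
    show ?thesis
    proof -
      have "p0 - 1 < L" "Suc p0 < L" using True by auto
      from this show ?thesis using e1 e2 \<open>col {vs!(p0-1), vs!p0} \<noteq> col {vs!p0, vs!Suc p0}\<close>
        by (intro exI[of _ "vs!(p0-1)"] exI[of _ "vs!Suc p0"] conjI) (auto simp: insert_commute)
    qed
  next
    case False
    have v0: "vs!p0 = vs!0"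
    proof (cases "p0 = 0")
      case False
      then have "p0 = L - 1" using \<open>\<not> (0 < p0 \<and> p0 < L-1)\<close> p0 by linarith
      then show ?thesis using last0 by simp
    qed simp
    have s: "Suc (L-2) = L-1" using L2 by auto
    have e1: "{vs!(L-2), vs!0} \<in> E" using we[of "L-2"] s last0 L2 by auto
    have e2: "{vs!0, vs!1} \<in> E" using we[of 0] L2 by auto
    have "col {vs!(L-2), vs!0} \<noteq> col {vs!0, vs!1}"
      using pcl s last0 unfolding walk_edge_def L_def by auto
    show ?thesis
    proof -
      have "L-2 < L" "1 < L" using L2 by auto
      then have "\<exists>qa<L. vs!(L-2) = vs!qa" "\<exists>qb<L. vs!1 = vs!qb" by blast+
      from this show ?thesis using e1 e2 v0 \<open>col {vs!(L-2), vs!0} \<noteq> col {vs!0, vs!1}\<close>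
        by (intro exI[of _ "vs!(L-2)"] exI[of _ "vs!1"] conjI) (auto simp: insert_commute)
    qed
  qed
  then obtain a b qa qb where ab: "{vs!p0,a}\<in>E" "{vs!p0,b}\<in>E" "col {vs!p0,a} \<noteq> col{vs!p0,b}"
    "qa<L" "a = vs!qa" "qb<L" "b = vs!qb" by blast
  define v where "v = vs!p0"
  have na: "a \<noteq> v" using Ec ab(1) v_def by fastforce
  have nb: "b \<noteq> v" using Ec ab(2) v_def by fastforce
  have pv: "pos v < length ord" "ord ! pos v = v" using pos inV p0 v_def by auto
  have pa: "pos a < length ord" "ord ! pos a = a" using pos inV ab by auto
  have pb: "pos b < length ord" "ord ! pos b = b" using pos inV ab by auto
  have "pos v < pos a" using p0(2) ab na pv pa v_def
    by (metis le_neq_implies_less)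
  moreover have "pos v < pos b" using p0(2) ab nb pv pb v_def
    by (metis le_neq_implies_less)
  ultimately have "col {ord ! pos v, ord ! pos a} = col {ord ! pos v, ord ! pos b}"
    using t3[rule_format, of "pos v" "pos a" "pos b"] pa pb pv ab v_def by simp
  then show False using pv pa pb ab v_def by auto
qed

lemma seq_pc:
  fixes g :: "nat \<Rightarrow> 'v \<times> 'v"
  assumes Ev: "\<forall>e\<in>E. e \<subseteq> V"
    and gE: "\<And>k. {fst (g k), snd (g k)} \<in> E"
    and gs: "\<And>k. fst (g (Suc k)) = snd (g k)"
    and gc: "\<And>k. col {fst (g (Suc k)), snd (g (Suc k))} \<noteq> col {fst (g k), snd (g k)}"
    and n: "n \<ge> 1" "g n = g 0"
  shows "pc_closed_walk V E col (map (\<lambda>k. fst (g k)) [0..<Suc n])"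
proof -
  define vs where "vs = map (\<lambda>k. fst (g k)) [0..<Suc n]"
  have len: "length vs = Suc n" unfolding vs_def by simp
  have nth: "\<And>k. k < Suc n \<Longrightarrow> vs ! k = fst (g k)" unfolding vs_def
    by (simp del: upt_Suc)
  have inV: "fst (g k) \<in> V" for k using gE[of k] Ev by auto
  have we: "\<And>k. k < n \<Longrightarrow> walk_edge vs k = {fst (g k), snd (g k)}"
    unfolding walk_edge_def using nth gs by auto
  have walk: "walk V E vs" unfolding walk_def
  proof (intro conjI allI impI)
    show "vs \<noteq> []" using len by auto
    show "set vs \<subseteq> V" unfolding vs_def using inV by auto
    fix i assume "Suc i < length vs"
    then show "{vs ! i, vs ! Suc i} \<in> E" using we[of i] len gE[of i] unfolding walk_edge_def by auto
  qed
  have hl: "hd vs = last vs"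
  proof -
    have "vs \<noteq> []" using len by auto
    then have "hd vs = vs ! 0" "last vs = vs ! n" using len by (auto simp: hd_conv_nth last_conv_nth)
    then show ?thesis using nth[of 0] nth[of n] n by auto
  qed
  have c1: "\<forall>i. i+2 < length vs \<longrightarrow> col (walk_edge vs i) \<noteq> col (walk_edge vs (Suc i))"
  proof (intro allI impI)
    fix i assume "i + 2 < length vs"
    then have "i < n" "Suc i < n" using len by auto
    then show "col (walk_edge vs i) \<noteq> col (walk_edge vs (Suc i))" using we gc[of i] by metis
  qed
  have c2: "col (walk_edge vs (length vs - 2)) \<noteq> col (walk_edge vs 0)"
  proof -
    have a: "walk_edge vs (n-1) = {fst (g (n-1)), snd (g (n-1))}" using we n by auto
    have b: "walk_edge vs 0 = {fst (g n), snd (g n)}" using we n by auto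
    have "Suc (n-1) = n" using n by auto
    moreover have "length vs - 2 = n - 1" using len by auto
    ultimately show ?thesis using a b gc[of "n-1"] n by metis
  qed
  show ?thesis using walk hl c1 c2 len unfolding pc_closed_walk_def vs_def[symmetric] by auto
qed

lemma card2_ex: assumes "card e = 2" "w \<in> e" shows "\<exists>x. e = {w,x} \<and> x \<noteq> w"
proof -
  obtain a b where ab: "e = {a,b}" "a \<noteq> b" using assms(1) card_2_iff by metis
  then show ?thesis using assms(2) by (auto simp: insert_commute)
qed

lemma bichrom_walk:
  assumes Ev: "\<forall>e\<in>E. e \<subseteq> V \<and> card e = 2"
    and fin: "finite V"
    and ne: "E \<noteq> {}"
    and bi: "\<forall>w\<in>V. \<forall>e\<in>E. w \<in> e \<longrightarrow> (\<exists>x. {w,x} \<in> E \<and> col {w,x} \<noteq> col e)"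
  shows "\<exists>vs. pc_closed_walk V E col vs"
proof -
  define nxt where "nxt = (\<lambda>(u,w). (w, SOME x. {w,x}\<in>E \<and> col{w,x} \<noteq> col{u,w}))"
  have nx: "fst (nxt p) = snd p \<and> {fst (nxt p), snd (nxt p)} \<in> E \<and>
     col {fst (nxt p), snd (nxt p)} \<noteq> col {fst p, snd p}" if "{fst p, snd p} \<in> E" for p
  proof -
    obtain u w where p: "p = (u,w)" by force
    have "w \<in> V" using that Ev p by auto
    then have "\<exists>x. {w,x}\<in>E \<and> col{w,x} \<noteq> col{u,w}" using bi that p by auto
    then have "{w,SOME x. {w,x}\<in>E \<and> col{w,x} \<noteq> col{u,w}}\<in>E \<and>
       col{w,SOME x. {w,x}\<in>E \<and> col{w,x} \<noteq> col{u,w}} \<noteq> col{u,w}" by (rule someI_ex)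
    then show ?thesis unfolding nxt_def p by simp
  qed
  obtain e where e: "e \<in> E" using ne by blast
  obtain u0 w0 where e0: "e = {u0,w0}" using e Ev card_2_iff by metis
  define f where "f n = (nxt ^^ n) (u0,w0)" for n
  have fS: "f (Suc n) = nxt (f n)" for n unfolding f_def by simp
  have fE: "{fst (f n), snd (f n)} \<in> E" for n
  proof (induction n)
    case 0 then show ?case using e e0 f_def by simp
  next
    case (Suc n) then show ?case using nx fS by metis
  qed
  have fV: "f n \<in> V \<times> V" for n using fE[of n] Ev by (cases "f n") auto
  define N where "N = card (V \<times> V)"
  have "\<not> inj_on f {..N}"
  proof
    assume "inj_on f {..N}"
    then have "card (f ` {..N}) = Suc N" by (simp add: card_image)
    moreover have "card (f ` {..N}) \<le> N" unfolding N_def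
      using fV fin by (intro card_mono) (auto simp: image_subset_iff)
    ultimately show False by simp
  qed
  then obtain i j where ij: "i < j" "f i = f j"
    unfolding inj_on_def by (metis linorder_neqE_nat)
  define g where "g k = f (i + k)" for k
  have "pc_closed_walk V E col (map (\<lambda>k. fst (g k)) [0..<Suc (j-i)])"
  proof (rule seq_pc)
    show "\<forall>e\<in>E. e \<subseteq> V" using Ev by auto
    show "{fst (g k), snd (g k)} \<in> E" for k using fE g_def by simp
    show "fst (g (Suc k)) = snd (g k)" for k using nx fE fS g_def by simp
    show "col {fst (g (Suc k)), snd (g (Suc k))} \<noteq> col {fst (g k), snd (g k)}" for k
      using nx[OF fE[of "i+k"]] fS[of "i+k"] g_def by (metis add_Suc_right)
    show "j - i \<ge> 1" using ij by simp
    show "g (j-i) = g 0" using ij g_def by simp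
  qed
  then show ?thesis by blast
qed

lemma no_pc_type3:
  assumes "finite V" "\<forall>e\<in>E. e \<subseteq> V \<and> card e = 2" "\<not> (\<exists>vs. pc_closed_walk V E col vs)"
  shows "\<exists>ord. type3_ordering V E col ord"
  using assms
proof (induction "card V" arbitrary: V E rule: less_induct)
  case less
  show ?case
  proof (cases "V = {}")
    case True
    then show ?thesis by (intro exI[of _ "[]"]) (simp add: type3_ordering_def)
  next
    case False
    have "\<exists>v\<in>V. \<forall>e1\<in>E. \<forall>e2\<in>E. v \<in> e1 \<longrightarrow> v \<in> e2 \<longrightarrow> col e1 = col e2"
    proof (rule ccontr)
      assume nm: "\<not> ?thesis"
      have bi: "\<forall>w\<in>V. \<forall>e\<in>E. w \<in> e \<longrightarrow> (\<exists>x. {w,x} \<in> E \<and> col {w,x} \<noteq> col e)"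
      proof (intro ballI impI)
        fix w e assume w: "w \<in> V" "e \<in> E" "w \<in> e"
        obtain e1 e2 where ee: "e1\<in>E" "e2\<in>E" "w\<in>e1" "w\<in>e2" "col e1 \<noteq> col e2" using nm w by blast
        obtain e' where e': "e'\<in>E" "w\<in>e'" "col e' \<noteq> col e" using ee by metis
        obtain x where "e' = {w,x}" using card2_ex e' less.prems(2) by metis
        then show "\<exists>x. {w,x} \<in> E \<and> col {w,x} \<noteq> col e" using e' by blast
      qed
      have "E \<noteq> {}" using nm False by blast
      then show False using bichrom_walk[OF less.prems(2) less.prems(1) _ bi] less.prems(3) by blast
    qed
    then obtain v where v: "v \<in> V" "\<forall>e1\<in>E. \<forall>e2\<in>E. v \<in> e1 \<longrightarrow> v \<in> e2 \<longrightarrow> col e1 = col e2" by blast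
    define V' where "V' = V - {v}"
    define E' where "E' = {e\<in>E. v \<notin> e}"
    have c: "card V' < card V" unfolding V'_def using v less.prems(1) by (metis card_Diff1_less)
    have E'V: "\<forall>e\<in>E'. e \<subseteq> V' \<and> card e = 2" using less.prems(2) unfolding E'_def V'_def by auto
    have np: "\<not> (\<exists>vs. pc_closed_walk V' E' col vs)"
    proof
      assume "\<exists>vs. pc_closed_walk V' E' col vs"
      then obtain vs where "pc_closed_walk V' E' col vs" by blast
      then have "pc_closed_walk V E col vs" unfolding pc_closed_walk_def walk_def V'_def E'_def by auto
      then show False using less.prems(3) by blast
    qed
    obtain ord' where o': "type3_ordering V' E' col ord'"
      using less.hyps[OF c _ E'V np] less.prems(1) V'_def by auto
    have d': "distinct ord'" "set ord' = V'" and t': "\<forall>i j k. i < j \<and> i < k \<and> j < length ord' \<and> k < length ord' \<and>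
        {ord' ! i, ord' ! j} \<in> E' \<and> {ord' ! i, ord' ! k} \<in> E' \<longrightarrow>
        col {ord' ! i, ord' ! j} = col {ord' ! i, ord' ! k}" using o' unfolding type3_ordering_def by auto
    have "type3_ordering V E col (v # ord')"
      unfolding type3_ordering_def
    proof (intro conjI allI impI)
      show "distinct (v # ord')" using d' V'_def by auto
      show "set (v # ord') = V" using d' V'_def v by auto
      fix i j k assume h: "i < j \<and> i < k \<and> j < length (v # ord') \<and> k < length (v # ord') \<and>
        {(v # ord') ! i, (v # ord') ! j} \<in> E \<and> {(v # ord') ! i, (v # ord') ! k} \<in> E"
      show "col {(v # ord') ! i, (v # ord') ! j} = col {(v # ord') ! i, (v # ord') ! k}"
      proof (cases i)
        case 0
        then show ?thesis using h v(2) by (metis insertI1 nth_Cons_0)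
      next
        case (Suc i')
        obtain j' k' where jk: "j = Suc j'" "k = Suc k'" using h Suc by (metis Suc_lessE)
        have nv: "ord' ! m \<noteq> v" if "m < length ord'" for m
          using d' V'_def that nth_mem by fastforce
        have "i' < j' \<and> i' < k' \<and> j' < length ord' \<and> k' < length ord' \<and>
          {ord' ! i', ord' ! j'} \<in> E' \<and> {ord' ! i', ord' ! k'} \<in> E'"
          using h Suc jk nv[of i'] nv[of j'] nv[of k'] unfolding E'_def by auto
        then show ?thesis using t' Suc jk by simp
      qed
    qed
    then show ?thesis by blast
  qed
qed

theorem mainTheorem4:
  fixes c :: nat and V :: "'v set" and E :: "'v set set" and col :: "'v set \<Rightarrow> nat"
  assumes "c \<ge> 2"
    and "edge_colored_graph c V E col"
  shows "pc_acyclic_type3 V E col \<longleftrightarrow> \<not> (\<exists>vs. pc_closed_walk V E col vs)"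
proof
  have g: "finite V" "\<forall>e\<in>E. e \<subseteq> V \<and> card e = 2" using assms(2) unfolding edge_colored_graph_def by auto
  show "pc_acyclic_type3 V E col \<Longrightarrow> \<not> (\<exists>vs. pc_closed_walk V E col vs)"
    using type3_no_pc g unfolding pc_acyclic_type3_def by blast
  show "\<not> (\<exists>vs. pc_closed_walk V E col vs) \<Longrightarrow> pc_acyclic_type3 V E col"
    using no_pc_type3 g unfolding pc_acyclic_type3_def by blast
qed

end
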